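(* Let $\Gamma=(G,w,\ell)$ be a tropical curve. Then the map $$\mathcal C_G\longrightarrow R^{\mathrm{trop}}_\Gamma,\qquad P\longmapsto [F_P]$$ is a bijection.
   Context: A tropical curve is a triple $\Gamma=(G,w,\ell)$ where $G=(V,E)$ is a finite connected graph (loops and multiple edges allowed), $w\colon V\to\mathbb Z_{\ge 0}$ is a weight function with $2w(v)-2+\deg_G(v)>0$ for all $v$ (degrees count loops twice), and $\ell\colon E\to\mathbb R_{>0}$. Its genus is $g=\sum_v w(v)+|E|-|V|+1$. $\Gamma$ is regarded as a metric space by identifying each edge $e$ with a segment (a circle if $e$ is a loop) of length $\ell(e)$, glued at vertices; $p_e$ denotes the mid-point of $e$. A divisor on $\Gamma$ is a finite formal $\mathbb Z$-combination of points of $\Gamma$. A rational function is a continuous piecewise linear $f\colon\Gamma\to\mathbb R$ with integer slopes and finitely many pieces; $\operatorname{div}(f)=\sum_p \operatorname{ord}_p(f)p$, where $\operatorname{ord}_p(f)$ is the sum of the outgoing slopes of $f$ at $p$. $\operatorname{Pic}(\Gamma)$ is the group of divisors modulo divisors of rational functions; $[D]$ denotes the class and $D\sim D'$ means $[D]=[D']$. $\mathcal C_G$ is the set of subsets $P\subseteq E$ such that every vertex has even degree in the subgraph spanned by $P$ (loops counting twice); it is an $\mathbb F_2$-vector space under symmetric difference (it is the kernel of the boundary map $\mathbb F_2^E\to\mathbb F_2^V$). For $P\in\mathcal C_G$ set $F_P:=\sum_{v\in V}\frac{\deg_P(v)}{2}v-\sum_{e\in P}p_e$. The set of square roots of zero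 is $R^{\mathrm{trop}}_\Gamma=\{[D]\in\operatorname{Pic}(\Gamma): [2D]=0\}$. *)

theory Defs
  imports Complex_Main
begin

text \<open>A tropical curve is given by a finite vertex set V, a finite edge set E,
  endpoint maps src, tgt (a loop has src e = tgt e), a weight w and a length l.\<close>

definition deg :: "'e set \<Rightarrow> ('e \<Rightarrow> 'v) \<Rightarrow> ('e \<Rightarrow> 'v) \<Rightarrow> 'v \<Rightarrow> nat" where
  "deg P src tgt v = card {e\<in>P. src e = v} + card {e\<in>P. tgt e = v}"

definition adj_rel :: "'e set \<Rightarrow> ('e \<Rightarrow> 'v) \<Rightarrow> ('e \<Rightarrow> 'v) \<Rightarrow> ('v \<times> 'v) set" where
  "adj_rel E src tgt = {(u, v). \<exists>e\<in>E. (src e = u \<and> tgt e = v) \<or> (src e = v \<and> tgt e = u)}"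

definition tropical_curve ::
  "'v set \<Rightarrow> 'e set \<Rightarrow> ('e \<Rightarrow> 'v) \<Rightarrow> ('e \<Rightarrow> 'v) \<Rightarrow> ('v \<Rightarrow> nat) \<Rightarrow> ('e \<Rightarrow> real) \<Rightarrow> bool" where
  "tropical_curve V E src tgt w l \<longleftrightarrow>
     finite V \<and> finite E \<and> V \<noteq> {} \<and>
     (\<forall>e\<in>E. src e \<in> V \<and> tgt e \<in> V) \<and>
     (\<forall>u\<in>V. \<forall>v\<in>V. (u, v) \<in> (adj_rel E src tgt)\<^sup>*) \<and>
     (\<forall>v\<in>V. 2 * int (w v) - 2 + int (deg E src tgt v) > 0) \<and>
     (\<forall>e\<in>E. l e > 0)"

text \<open>Points of the metric space: vertices, and interior points of edges
  (parameter t with 0 < t < l e, measured from src e).\<close>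
datatype ('v, 'e) pt = Vert 'v | EPt 'e real

definition points :: "'v set \<Rightarrow> 'e set \<Rightarrow> ('e \<Rightarrow> real) \<Rightarrow> ('v, 'e) pt set" where
  "points V E l = Vert ` V \<union> {EPt e t | e t. e \<in> E \<and> 0 < t \<and> t < l e}"

definition edge_fun :: "('e \<Rightarrow> 'v) \<Rightarrow> ('e \<Rightarrow> 'v) \<Rightarrow> ('e \<Rightarrow> real) \<Rightarrow> (('v, 'e) pt \<Rightarrow> real)
    \<Rightarrow> 'e \<Rightarrow> real \<Rightarrow> real" where
  "edge_fun src tgt l f e t =
     (if t \<le> 0 then f (Vert (src e)) else if t \<ge> l e then f (Vert (tgt e)) else f (EPt e t))"

definition int_pl :: "real \<Rightarrow> (real \<Rightarrow> real) \<Rightarrow> bool" where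
  "int_pl L \<phi> \<longleftrightarrow> (\<exists>ts :: real list. length ts \<ge> 2 \<and> sorted_wrt (<) ts \<and>
      hd ts = 0 \<and> last ts = L \<and>
      (\<forall>i < length ts - 1. \<exists>s :: int. \<exists>c :: real.
          \<forall>t \<in> {ts ! i .. ts ! (i+1)}. \<phi> t = of_int s * t + c))"

definition rational_fun :: "'v set \<Rightarrow> 'e set \<Rightarrow> ('e \<Rightarrow> 'v) \<Rightarrow> ('e \<Rightarrow> 'v) \<Rightarrow> ('e \<Rightarrow> real)
    \<Rightarrow> (('v, 'e) pt \<Rightarrow> real) \<Rightarrow> bool" where
  "rational_fun V E src tgt l f \<longleftrightarrow> (\<forall>e\<in>E. int_pl (l e) (edge_fun src tgt l f e))"

definition rslope :: "(real \<Rightarrow> real) \<Rightarrow> real \<Rightarrow> real" where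
  "rslope \<phi> t = Lim (at_right 0) (\<lambda>h. (\<phi> (t + h) - \<phi> t) / h)"

definition lslope :: "(real \<Rightarrow> real) \<Rightarrow> real \<Rightarrow> real" where
  "lslope \<phi> t = Lim (at_right 0) (\<lambda>h. (\<phi> t - \<phi> (t - h)) / h)"

text \<open>ord_p(f): sum of outgoing slopes of f at p.\<close>
fun ord :: "'e set \<Rightarrow> ('e \<Rightarrow> 'v) \<Rightarrow> ('e \<Rightarrow> 'v) \<Rightarrow> ('e \<Rightarrow> real)
    \<Rightarrow> (('v, 'e) pt \<Rightarrow> real) \<Rightarrow> ('v, 'e) pt \<Rightarrow> real" where
  "ord E src tgt l f (Vert v) =
     (\<Sum>e\<in>{e\<in>E. src e = v}. rslope (edge_fun src tgt l f e) 0)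
   + (\<Sum>e\<in>{e\<in>E. tgt e = v}. - lslope (edge_fun src tgt l f e) (l e))"
| "ord E src tgt l f (EPt e t) =
     rslope (edge_fun src tgt l f e) t - lslope (edge_fun src tgt l f e) t"

definition is_divisor :: "'v set \<Rightarrow> 'e set \<Rightarrow> ('e \<Rightarrow> real) \<Rightarrow> (('v, 'e) pt \<Rightarrow> int) \<Rightarrow> bool" where
  "is_divisor V E l D \<longleftrightarrow> finite {p. D p \<noteq> 0} \<and> {p. D p \<noteq> 0} \<subseteq> points V E l"

definition principal :: "'v set \<Rightarrow> 'e set \<Rightarrow> ('e \<Rightarrow> 'v) \<Rightarrow> ('e \<Rightarrow> 'v) \<Rightarrow> ('e \<Rightarrow> real)
    \<Rightarrow> (('v, 'e) pt \<Rightarrow> int) \<Rightarrow> bool" where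
  "principal V E src tgt l D \<longleftrightarrow> is_divisor V E l D \<and>
     (\<exists>f. rational_fun V E src tgt l f \<and>
          (\<forall>p \<in> points V E l. of_int (D p) = ord E src tgt l f p))"

definition div_class :: "'v set \<Rightarrow> 'e set \<Rightarrow> ('e \<Rightarrow> 'v) \<Rightarrow> ('e \<Rightarrow> 'v) \<Rightarrow> ('e \<Rightarrow> real)
    \<Rightarrow> (('v, 'e) pt \<Rightarrow> int) \<Rightarrow> (('v, 'e) pt \<Rightarrow> int) set" where
  "div_class V E src tgt l D =
     {D'. is_divisor V E l D' \<and> principal V E src tgt l (\<lambda>p. D p - D' p)}"

definition Pic :: "'v set \<Rightarrow> 'e set \<Rightarrow> ('e \<Rightarrow> 'v) \<Rightarrow> ('e \<Rightarrow> 'v) \<Rightarrow> ('e \<Rightarrow> real)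
    \<Rightarrow> (('v, 'e) pt \<Rightarrow> int) set set" where
  "Pic V E src tgt l = {div_class V E src tgt l D | D. is_divisor V E l D}"

definition R_trop :: "'v set \<Rightarrow> 'e set \<Rightarrow> ('e \<Rightarrow> 'v) \<Rightarrow> ('e \<Rightarrow> 'v) \<Rightarrow> ('e \<Rightarrow> real)
    \<Rightarrow> (('v, 'e) pt \<Rightarrow> int) set set" where
  "R_trop V E src tgt l = {div_class V E src tgt l D | D.
      is_divisor V E l D \<and> principal V E src tgt l (\<lambda>p. 2 * D p)}"

definition cycle_space :: "'v set \<Rightarrow> 'e set \<Rightarrow> ('e \<Rightarrow> 'v) \<Rightarrow> ('e \<Rightarrow> 'v) \<Rightarrow> 'e set set" where
  "cycle_space V E src tgt = {P. P \<subseteq> E \<and> (\<forall>v\<in>V. even (deg P src tgt v))}"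

definition F_div :: "('e \<Rightarrow> 'v) \<Rightarrow> ('e \<Rightarrow> 'v) \<Rightarrow> ('e \<Rightarrow> real) \<Rightarrow> 'e set
    \<Rightarrow> ('v, 'e) pt \<Rightarrow> int" where
  "F_div src tgt l P p = (case p of
      Vert v \<Rightarrow> int (deg P src tgt v div 2)
    | EPt e t \<Rightarrow> (if e \<in> P \<and> t = l e / 2 then -1 else 0))"

end

theory Submission
  imports Defs
begin


definition pwl :: "real \<Rightarrow> (real \<Rightarrow> bool) \<Rightarrow> (real \<Rightarrow> real) \<Rightarrow> bool" where
  "pwl L S \<phi> \<longleftrightarrow> (\<exists>B. finite B \<and> (\<forall>a b. 0 \<le> a \<longrightarrow> a < b \<longrightarrow> b \<le> L \<longrightarrow>
      (\<forall>x\<in>B. \<not>(a < x \<and> x < b)) \<longrightarrow> (\<exists>s c. S s \<and> (\<forall>t\<in>{a..b}. \<phi> t = s*t + c))))"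

lemma rslope_lin:
  assumes "a < b" "\<forall>x\<in>{a..b}. \<phi> x = s*x+c"
  shows "rslope \<phi> a = s"
  unfolding rslope_def
proof (rule tendsto_Lim[OF trivial_limit_at_right_real], rule tendsto_eventually)
  show "\<forall>\<^sub>F h in at_right 0. (\<phi> (a + h) - \<phi> a) / h = s"
    unfolding eventually_at_right_field
  proof (intro exI[of _ "b - a"] conjI allI impI)
    fix h :: real assume "0 < h" "h < b - a"
    then have "\<phi> (a+h) = s*(a+h)+c" "\<phi> a = s*a+c" using assms by auto
    then show "(\<phi> (a + h) - \<phi> a) / h = s" using \<open>0<h\<close> by (simp add: field_simps)
  qed (use assms in auto)
qed

lemma lslope_lin:
  assumes "a < b" "\<forall>x\<in>{a..b}. \<phi> x = s*x+c"
  shows "lslope \<phi> b = s"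
  unfolding lslope_def
proof (rule tendsto_Lim[OF trivial_limit_at_right_real], rule tendsto_eventually)
  show "\<forall>\<^sub>F h in at_right 0. (\<phi> b - \<phi> (b - h)) / h = s"
    unfolding eventually_at_right_field
  proof (intro exI[of _ "b - a"] conjI allI impI)
    fix h :: real assume "0 < h" "h < b - a"
    then have "\<phi> (b-h) = s*(b-h)+c" "\<phi> b = s*b+c" using assms by auto
    then show "(\<phi> b - \<phi> (b-h)) / h = s" using \<open>0<h\<close> by (simp add: field_simps)
  qed (use assms in auto)
qed

lemma pwl_right:
  assumes "pwl L S \<phi>" "0 \<le> t" "t < L"
  shows "\<exists>b s c. t < b \<and> b \<le> L \<and> S s \<and> (\<forall>x\<in>{t..b}. \<phi> x = s*x+c)"
proof -
  obtain B where B: "finite B" and H: "\<And>a b. 0 \<le> a \<Longrightarrow> a < b \<Longrightarrow> b \<le> L \<Longrightarrow>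
      (\<forall>x\<in>B. \<not>(a < x \<and> x < b)) \<Longrightarrow> (\<exists>s c. S s \<and> (\<forall>t\<in>{a..b}. \<phi> t = s*t + c))"
    using assms(1) unfolding pwl_def by blast
  define A where "A = insert L {x\<in>B. t < x}"
  have fA: "finite A" using B unfolding A_def by auto
  define b where "b = Min A"
  have bA: "b \<in> A" unfolding b_def by (rule Min_in[OF fA]) (simp add: A_def)
  have "t < b" using bA assms unfolding A_def by auto
  moreover have "b \<le> L" unfolding b_def using fA by (simp add: A_def)
  moreover have "\<forall>x\<in>B. \<not>(t < x \<and> x < b)"
  proof (intro ballI notI)
    fix x assume "x \<in> B" "t < x \<and> x < b"
    then have "x \<in> A" unfolding A_def by auto
    then have "b \<le> x" unfolding b_def using fA by simp
    with \<open>t < x \<and> x < b\<close> show False by simp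
  qed
  ultimately show ?thesis using H[of t b] assms by blast
qed

lemma pwl_left:
  assumes "pwl L S \<phi>" "0 < t" "t \<le> L"
  shows "\<exists>a s c. 0 \<le> a \<and> a < t \<and> S s \<and> (\<forall>x\<in>{a..t}. \<phi> x = s*x+c)"
proof -
  obtain B where B: "finite B" and H: "\<And>a b. 0 \<le> a \<Longrightarrow> a < b \<Longrightarrow> b \<le> L \<Longrightarrow>
      (\<forall>x\<in>B. \<not>(a < x \<and> x < b)) \<Longrightarrow> (\<exists>s c. S s \<and> (\<forall>t\<in>{a..b}. \<phi> t = s*t + c))"
    using assms(1) unfolding pwl_def by blast
  define A where "A = insert 0 {x\<in>B. x < t}"
  have fA: "finite A" using B unfolding A_def by auto
  define a where "a = Max A"
  have aA: "a \<in> A" unfolding a_def by (rule Max_in[OF fA]) (simp add: A_def)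
  have "a < t" using aA assms unfolding A_def by auto
  moreover have "0 \<le> a" unfolding a_def using fA by (simp add: A_def)
  moreover have "\<forall>x\<in>B. \<not>(a < x \<and> x < t)"
  proof (intro ballI notI)
    fix x assume "x \<in> B" "a < x \<and> x < t"
    then have "x \<in> A" unfolding A_def by auto
    then have "x \<le> a" unfolding a_def using fA by simp
    with \<open>a < x \<and> x < t\<close> show False by simp
  qed
  ultimately show ?thesis using H[of a t] assms by blast
qed

lemma pwl_rslope:
  assumes "pwl L S \<phi>" "0 \<le> t" "t < L"
  shows "\<exists>b c. t < b \<and> b \<le> L \<and> S (rslope \<phi> t) \<and> (\<forall>x\<in>{t..b}. \<phi> x = rslope \<phi> t*x+c)"
  using pwl_right[OF assms] rslope_lin by metis

lemma pwl_lslope: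
  assumes "pwl L S \<phi>" "0 < t" "t \<le> L"
  shows "\<exists>a c. 0 \<le> a \<and> a < t \<and> S (lslope \<phi> t) \<and> (\<forall>x\<in>{a..t}. \<phi> x = lslope \<phi> t*x+c)"
  using pwl_left[OF assms] lslope_lin by metis

lemma rslope_comb:
  assumes "pwl L S1 \<phi>" "pwl L S2 \<psi>" "0 \<le> t" "t < L"
  shows "rslope (\<lambda>x. \<alpha> * \<phi> x + \<beta> * \<psi> x) t = \<alpha> * rslope \<phi> t + \<beta> * rslope \<psi> t"
proof -
  obtain b1 c1 where 1: "t < b1" "\<forall>x\<in>{t..b1}. \<phi> x = rslope \<phi> t*x+c1"
    using pwl_rslope[OF assms(1,3,4)] by blast
  obtain b2 c2 where 2: "t < b2" "\<forall>x\<in>{t..b2}. \<psi> x = rslope \<psi> t*x+c2"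
    using pwl_rslope[OF assms(2,3,4)] by blast
  have "\<forall>x\<in>{t..min b1 b2}. \<alpha> * \<phi> x + \<beta> * \<psi> x
     = (\<alpha> * rslope \<phi> t + \<beta> * rslope \<psi> t) * x + (\<alpha>*c1 + \<beta>*c2)"
    using 1 2 by (auto simp: algebra_simps)
  then show ?thesis by (intro rslope_lin[of t "min b1 b2"]) (use 1 2 in auto)
qed

lemma lslope_comb:
  assumes "pwl L S1 \<phi>" "pwl L S2 \<psi>" "0 < t" "t \<le> L"
  shows "lslope (\<lambda>x. \<alpha> * \<phi> x + \<beta> * \<psi> x) t = \<alpha> * lslope \<phi> t + \<beta> * lslope \<psi> t"
proof -
  obtain b1 c1 where 1: "b1 < t" "\<forall>x\<in>{b1..t}. \<phi> x = lslope \<phi> t*x+c1"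
    using pwl_lslope[OF assms(1,3,4)] by blast
  obtain b2 c2 where 2: "b2 < t" "\<forall>x\<in>{b2..t}. \<psi> x = lslope \<psi> t*x+c2"
    using pwl_lslope[OF assms(2,3,4)] by blast
  have "\<forall>x\<in>{max b1 b2..t}. \<alpha> * \<phi> x + \<beta> * \<psi> x
     = (\<alpha> * lslope \<phi> t + \<beta> * lslope \<psi> t) * x + (\<alpha>*c1 + \<beta>*c2)"
    using 1 2 by (auto simp: algebra_simps)
  then show ?thesis by (intro lslope_lin[of "max b1 b2" t]) (use 1 2 in auto)
qed

lemma pwl_comb:
  assumes "pwl L S1 \<phi>" "pwl L S2 \<psi>" "\<And>x y. S1 x \<Longrightarrow> S2 y \<Longrightarrow> S3 (\<alpha>*x+\<beta>*y)"
  shows "pwl L S3 (\<lambda>t. \<alpha> * \<phi> t + \<beta> * \<psi> t)"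
proof -
  obtain B1 where B1: "finite B1" and H1: "\<And>a b. 0 \<le> a \<Longrightarrow> a < b \<Longrightarrow> b \<le> L \<Longrightarrow>
      (\<forall>x\<in>B1. \<not>(a < x \<and> x < b)) \<Longrightarrow> (\<exists>s c. S1 s \<and> (\<forall>t\<in>{a..b}. \<phi> t = s*t + c))"
    using assms(1) unfolding pwl_def by blast
  obtain B2 where B2: "finite B2" and H2: "\<And>a b. 0 \<le> a \<Longrightarrow> a < b \<Longrightarrow> b \<le> L \<Longrightarrow>
      (\<forall>x\<in>B2. \<not>(a < x \<and> x < b)) \<Longrightarrow> (\<exists>s c. S2 s \<and> (\<forall>t\<in>{a..b}. \<psi> t = s*t + c))"
    using assms(2) unfolding pwl_def by blast
  show ?thesis unfolding pwl_def
  proof (intro exI[of _ "B1 \<union> B2"] conjI allI impI)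
    fix a b :: real assume h: "0 \<le> a" "a < b" "b \<le> L" "\<forall>x\<in>B1 \<union> B2. \<not> (a < x \<and> x < b)"
    obtain s1 c1 where 1: "S1 s1" "\<forall>t\<in>{a..b}. \<phi> t = s1*t + c1" using H1[of a b] h by auto
    obtain s2 c2 where 2: "S2 s2" "\<forall>t\<in>{a..b}. \<psi> t = s2*t + c2" using H2[of a b] h by auto
    show "\<exists>s c. S3 s \<and> (\<forall>t\<in>{a..b}. \<alpha> * \<phi> t + \<beta> * \<psi> t = s * t + c)"
      using 1 2 assms(3)[OF 1(1) 2(1)]
      by (intro exI[of _ "\<alpha>*s1+\<beta>*s2"] exI[of _ "\<alpha>*c1+\<beta>*c2"]) (auto simp: algebra_simps)
  qed (use B1 B2 in auto)
qed

lemma pwl_mono: "pwl L S \<phi> \<Longrightarrow> (\<And>s. S s \<Longrightarrow> S' s) \<Longrightarrow> pwl L S' \<phi>"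
  unfolding pwl_def by metis

lemma pwl_int:
  assumes "pwl L S \<phi>" "\<And>t. 0 \<le> t \<Longrightarrow> t < L \<Longrightarrow> rslope \<phi> t \<in> \<int>"
  shows "pwl L (\<lambda>s. s \<in> \<int>) \<phi>"
proof -
  obtain B where B: "finite B" and H: "\<And>a b. 0 \<le> a \<Longrightarrow> a < b \<Longrightarrow> b \<le> L \<Longrightarrow>
      (\<forall>x\<in>B. \<not>(a < x \<and> x < b)) \<Longrightarrow> (\<exists>s c. S s \<and> (\<forall>t\<in>{a..b}. \<phi> t = s*t + c))"
    using assms(1) unfolding pwl_def by blast
  show ?thesis unfolding pwl_def
  proof (intro exI[of _ B] conjI allI impI)
    fix a b :: real assume h: "0 \<le> a" "a < b" "b \<le> L" "\<forall>x\<in>B. \<not> (a < x \<and> x < b)"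
    obtain s c where 1: "\<forall>t\<in>{a..b}. \<phi> t = s*t + c" using H[OF h] by auto
    have "rslope \<phi> a = s" using rslope_lin[OF h(2) 1] .
    then have "s \<in> \<int>" using assms(2)[of a] h by auto
    then show "\<exists>s c. s \<in> \<int> \<and> (\<forall>t\<in>{a..b}. \<phi> t = s * t + c)" using 1 by blast
  qed (use B in auto)
qed

lemma pwl_chain:
  assumes "pwl L S \<phi>" "0 < L" "Pr 0"
    and step: "\<And>a b s c. 0 \<le> a \<Longrightarrow> a < b \<Longrightarrow> b \<le> L \<Longrightarrow> S s \<Longrightarrow>
        (\<forall>x\<in>{a..b}. \<phi> x = s*x+c) \<Longrightarrow> Pr a \<Longrightarrow> \<forall>t\<in>{a..b}. Pr t"
  shows "\<forall>t\<in>{0..L}. Pr t"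
proof -
  obtain B where B: "finite B" and H: "\<And>a b. 0 \<le> a \<Longrightarrow> a < b \<Longrightarrow> b \<le> L \<Longrightarrow>
      (\<forall>x\<in>B. \<not>(a < x \<and> x < b)) \<Longrightarrow> (\<exists>s c. S s \<and> (\<forall>t\<in>{a..b}. \<phi> t = s*t + c))"
    using assms(1) unfolding pwl_def by blast
  have main: "\<forall>t. 0 \<le> t \<and> t \<le> L \<and> card {x\<in>B. 0 < x \<and> x < t} = n \<longrightarrow> (\<forall>y\<in>{0..t}. Pr y)" for n
  proof (induction n rule: less_induct)
    case (less n)
    show ?case
    proof (intro allI impI)
      fix t assume t: "0 \<le> t \<and> t \<le> L \<and> card {x\<in>B. 0 < x \<and> x < t} = n"
      show "\<forall>y\<in>{0..t}. Pr y"
      proof (cases "t = 0")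
        case True then show ?thesis using assms(3) by auto
      next
        case False
        define A where "A = {x\<in>B. 0 < x \<and> x < t}"
        have fA: "finite A" using B unfolding A_def by auto
        define a where "a = Max (insert 0 A)"
        have aA: "a \<in> insert 0 A" unfolding a_def by (rule Max_in) (use fA in auto)
        have a0: "0 \<le> a" unfolding a_def using fA by simp
        have at: "a < t" using aA False t unfolding A_def by auto
        have gap: "\<forall>x\<in>B. \<not>(a < x \<and> x < t)"
        proof (intro ballI notI)
          fix x assume "x \<in> B" "a < x \<and> x < t"
          then have "x \<in> A" unfolding A_def using a0 by auto
          then have "x \<le> a" unfolding a_def using fA by simp
          with \<open>a < x \<and> x < t\<close> show False by simp
        qed
        obtain s c where sc: "S s" "\<forall>x\<in>{a..t}. \<phi> x = s*x + c" using H[OF a0 at _ gap] t by auto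
        have Pa: "\<forall>y\<in>{0..a}. Pr y"
        proof (cases "a = 0")
          case True then show ?thesis using assms(3) by auto
        next
          case False
          then have "a \<in> A" using aA by auto
          have sub: "{x\<in>B. 0 < x \<and> x < a} \<subset> A" using \<open>a \<in> A\<close> at unfolding A_def by auto
          have "card {x\<in>B. 0 < x \<and> x < a} < n"
            using psubset_card_mono[OF fA sub] t unfolding A_def by simp
          then show ?thesis using less[rule_format, of _ a] a0 at t by auto
        qed
        then have "Pr a" using a0 by auto
        then have "\<forall>y\<in>{a..t}. Pr y" using step[OF a0 at _ sc(1) sc(2)] t by auto
        with Pa show ?thesis by (metis atLeastAtMost_iff linorder_le_cases)
      qed
    qed
  qed
  show ?thesis using main assms(2) by fastforce
qed



lemma int_pl_pwl:
  assumes "int_pl L \<phi>"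
  shows "pwl L (\<lambda>s. s \<in> \<int>) \<phi>"
proof -
  obtain ts :: "real list" where ts: "length ts \<ge> 2" "sorted_wrt (<) ts" "hd ts = 0" "last ts = L"
    and pc: "\<forall>i < length ts - 1. \<exists>s :: int. \<exists>c :: real.
          \<forall>t \<in> {ts ! i .. ts ! (i+1)}. \<phi> t = of_int s * t + c"
    using assms unfolding int_pl_def by blast
  have ne: "ts \<noteq> []" using ts(1) by auto
  have t0: "ts ! 0 = 0" using ts(3) ne by (simp add: hd_conv_nth)
  have tL: "ts ! (length ts - 1) = L" using ts(4) ne by (simp add: last_conv_nth)
  show ?thesis unfolding pwl_def
  proof (intro exI[of _ "set ts"] conjI allI impI)
    fix a b :: real assume h: "0 \<le> a" "a < b" "b \<le> L" "\<forall>x\<in>set ts. \<not> (a < x \<and> x < b)"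
    define J where "J = {j. j < length ts \<and> ts ! j \<le> a}"
    have fJ: "finite J" unfolding J_def by auto
    have "0 \<in> J" unfolding J_def using ne t0 h by auto
    define j where "j = Max J"
    have jJ: "j \<in> J" unfolding j_def by (rule Max_in[OF fJ]) (use \<open>0 \<in> J\<close> in auto)
    have jlt: "j < length ts - 1"
    proof (rule ccontr)
      assume "\<not> j < length ts - 1"
      moreover have "j < length ts" using jJ unfolding J_def by simp
      ultimately have "j = length ts - 1" by linarith
      then have "ts ! j = L" using tL by simp
      moreover have "ts ! j \<le> a" using jJ unfolding J_def by simp
      ultimately show False using h by simp
    qed
    have a1: "a < ts ! (j+1)"
    proof (rule ccontr)
      assume "\<not> a < ts ! (j+1)"
      then have "j+1 \<in> J" unfolding J_def using jlt by auto
      then have "j+1 \<le> j" unfolding j_def using fJ by simp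
      then show False by simp
    qed
    have b1: "b \<le> ts ! (j+1)"
    proof (rule ccontr)
      assume "\<not> b \<le> ts ! (j+1)"
      moreover have "ts ! (j+1) \<in> set ts" using jlt by auto
      ultimately show False using h(4) a1 by auto
    qed
    obtain s :: int and c where sc: "\<forall>t \<in> {ts ! j .. ts ! (j+1)}. \<phi> t = of_int s * t + c"
      using pc[rule_format, OF jlt] by blast
    have "ts ! j \<le> a" using jJ unfolding J_def by auto
    then have "\<forall>t\<in>{a..b}. \<phi> t = of_int s * t + c" using sc b1 by (meson atLeastAtMost_iff order_trans)
    then show "\<exists>s c. s \<in> \<int> \<and> (\<forall>t\<in>{a..b}. \<phi> t = s * t + c)" by (intro exI[of _ "of_int s"] exI[of _ c]) simp
  qed simp
qed

lemma pwl_int_pl: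
  assumes "pwl L (\<lambda>s. s \<in> \<int>) \<phi>" "0 < L"
  shows "int_pl L \<phi>"
proof -
  obtain B where B: "finite B" and H: "\<And>a b. 0 \<le> a \<Longrightarrow> a < b \<Longrightarrow> b \<le> L \<Longrightarrow>
      (\<forall>x\<in>B. \<not>(a < x \<and> x < b)) \<Longrightarrow> (\<exists>s c. s \<in> \<int> \<and> (\<forall>t\<in>{a..b}. \<phi> t = s*t + c))"
    using assms(1) unfolding pwl_def by blast
  define B' where "B' = insert 0 (insert L {x\<in>B. 0 < x \<and> x < L})"
  have fB: "finite B'" using B unfolding B'_def by auto
  have B'r: "\<forall>x\<in>B'. 0 \<le> x \<and> x \<le> L" using assms(2) unfolding B'_def by auto
  define ts where "ts = sorted_list_of_set B'"
  have st: "set ts = B'" unfolding ts_def using fB by simp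
  have so: "sorted_wrt (<) ts" unfolding ts_def by (rule strict_sorted_list_of_set)
  have "card B' \<ge> 2" unfolding B'_def using assms(2) B by (auto simp: card_insert_if)
  then have len: "length ts \<ge> 2" unfolding ts_def using fB by simp
  then obtain y ys where yys: "ts = y # ys" by (cases ts) auto
  have hd0: "hd ts = 0"
  proof -
    have "0 \<in> set (y#ys)" using st yys unfolding B'_def by auto
    then have "y = 0 \<or> 0 \<in> set ys" by simp
    moreover have "y \<ge> 0" using B'r st yys by auto
    moreover have "\<forall>z\<in>set ys. y < z" using so yys by simp
    ultimately have "y = 0" by fastforce
    then show ?thesis using yys by simp
  qed
  have lastL: "last ts = L"
  proof -
    have ne: "ts \<noteq> []" using yys by simp
    obtain zs z where e: "ts = zs @ [z]" using ne by (metis rev_exhaust)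
    have "\<forall>x\<in>set zs. x < z" using so e by (simp add: sorted_wrt_append)
    moreover have "L \<in> set (zs @ [z])" using st e unfolding B'_def by auto
    moreover have "z \<le> L" using B'r st e by auto
    ultimately have "z = L" by fastforce
    then show ?thesis using e by simp
  qed
  show ?thesis unfolding int_pl_def
  proof (intro exI[of _ ts] conjI allI impI)
    fix i assume i: "i < length ts - 1"
    have lt: "ts ! i < ts ! (i+1)" using sorted_wrt_nth_less[OF so, of i "i+1"] i by simp
    have m1: "ts ! i \<in> B'" using st i nth_mem[of i ts] by simp
    have m2: "ts ! (i+1) \<in> B'" using st i nth_mem[of "i+1" ts] by simp
    have a0: "0 \<le> ts ! i" using B'r m1 by auto
    have bL: "ts ! (i+1) \<le> L" using B'r m2 by auto
    have gap: "\<forall>x\<in>B. \<not>(ts ! i < x \<and> x < ts ! (i+1))"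
    proof (intro ballI notI)
      fix x assume x: "x \<in> B" "ts ! i < x \<and> x < ts ! (i+1)"
      then have "x \<in> B'" unfolding B'_def using a0 bL by auto
      then obtain k where k: "k < length ts" "ts ! k = x" using st by (metis in_set_conv_nth)
      have "\<not> k \<le> i"
      proof
        assume "k \<le> i"
        then have "ts ! k \<le> ts ! i" using sorted_wrt_nth_less[OF so, of k i] i
          by (cases "k = i") (auto, linarith)
        then show False using x k by simp
      qed
      moreover have "\<not> i + 1 \<le> k"
      proof
        assume "i+1 \<le> k"
        then have "ts ! (i+1) \<le> ts ! k" using sorted_wrt_nth_less[OF so, of "i+1" k] k
          by (cases "k = i+1") auto
        then show False using x k by simp
      qed
      ultimately show False by simp
    qed
    obtain s c where sc: "s \<in> \<int>" "\<forall>t\<in>{ts!i..ts!(i+1)}. \<phi> t = s*t + c"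
      using H[OF a0 lt bL gap] by blast
    obtain s' where "s = of_int s'" using sc(1) Ints_cases by blast
    then show "\<exists>s::int. \<exists>c. \<forall>t\<in>{ts ! i..ts ! (i + 1)}. \<phi> t = real_of_int s * t + c"
      using sc by blast
  qed (use len so hd0 lastL in auto)
qed



lemma edge_fun_comb:
  "edge_fun src tgt l (\<lambda>p. \<alpha> * f p + \<beta> * g p) e
     = (\<lambda>t. \<alpha> * edge_fun src tgt l f e t + \<beta> * edge_fun src tgt l g e t)"
  unfolding edge_fun_def by auto

definition tent :: "('e \<Rightarrow> real) \<Rightarrow> 'e set \<Rightarrow> ('v,'e) pt \<Rightarrow> real" where
  "tent l P p = (case p of Vert v \<Rightarrow> 0 | EPt e t \<Rightarrow> if e \<in> P then min t (l e - t) / 2 else 0)"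

lemma edge_tent:
  "edge_fun src tgt l (tent l P) e t
     = (if e \<in> P \<and> 0 < t \<and> t < l e then min t (l e - t) / 2 else 0)"
  by (simp add: edge_fun_def tent_def)

lemma tent_lin1:
  assumes "0 < l e" "e \<in> P"
  shows "\<forall>x\<in>{0..l e/2}. edge_fun src tgt l (tent l P) e x = (1/2)*x + 0"
  using assms by (auto simp: edge_tent min_def)

lemma tent_lin2:
  assumes "0 < l e" "e \<in> P"
  shows "\<forall>x\<in>{l e/2..l e}. edge_fun src tgt l (tent l P) e x = (-1/2)*x + l e/2"
  using assms by (auto simp: edge_tent min_def field_simps)

lemma tent_lin0:
  assumes "e \<notin> P"
  shows "\<forall>x\<in>A. edge_fun src tgt l (tent l P) e x = 0*x + 0"
  using assms by (auto simp: edge_tent)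

lemma tent_pwl:
  assumes "0 < l e"
  shows "pwl (l e) (\<lambda>s. s \<in> {-1/2, 0, 1/2}) (edge_fun src tgt l (tent l P) e)"
  unfolding pwl_def
proof (intro exI[of _ "{l e/2}"] conjI allI impI)
  fix a b :: real assume h: "0 \<le> a" "a < b" "b \<le> l e" "\<forall>x\<in>{l e / 2}. \<not> (a < x \<and> x < b)"
  show "\<exists>s c. s \<in> {- 1 / 2, 0, 1 / 2} \<and> (\<forall>t\<in>{a..b}. edge_fun src tgt l (tent l P) e t = s * t + c)"
  proof (cases "e \<in> P")
    case False then show ?thesis using tent_lin0[OF False, of "{a..b}"] by blast
  next
    case True
    have "b \<le> l e/2 \<or> l e/2 \<le> a" using h(4) by auto
    then show ?thesis
    proof
      assume "b \<le> l e/2"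
      then show ?thesis using tent_lin1[where l=l and e=e and P=P and src=src and tgt=tgt, OF assms True] h by (intro exI[of _ "1/2"] exI[of _ 0]) auto
    next
      assume "l e/2 \<le> a"
      then show ?thesis using tent_lin2[where l=l and e=e and P=P and src=src and tgt=tgt, OF assms True] h
        by (intro exI[of _ "-1/2"] exI[of _ "l e/2"]) auto
    qed
  qed
qed simp

lemma tent_rslope:
  assumes "0 < l e" "0 \<le> t" "t < l e"
  shows "rslope (edge_fun src tgt l (tent l P) e) t
           = (if e \<in> P then (if t < l e/2 then 1/2 else -1/2) else 0)"
proof (cases "e \<in> P")
  case False then show ?thesis using rslope_lin[OF assms(3) tent_lin0[OF False]] by simp
next
  case True
  show ?thesis
  proof (cases "t < l e/2")
    case True2: True
    have "\<forall>x\<in>{t..l e/2}. edge_fun src tgt l (tent l P) e x = (1/2)*x + 0"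
      using tent_lin1[where l=l and e=e and P=P and src=src and tgt=tgt, OF assms(1) True] assms by auto
    then have "rslope (edge_fun src tgt l (tent l P) e) t = 1/2" by (rule rslope_lin[OF True2])
    then show ?thesis using True True2 by simp
  next
    case False
    have "\<forall>x\<in>{t..l e}. edge_fun src tgt l (tent l P) e x = (-1/2)*x + l e/2"
      using tent_lin2[where l=l and e=e and P=P and src=src and tgt=tgt, OF assms(1) True] False by auto
    then have "rslope (edge_fun src tgt l (tent l P) e) t = -1/2" by (rule rslope_lin[OF assms(3)])
    then show ?thesis using True False by simp
  qed
qed

lemma tent_lslope:
  assumes "0 < l e" "0 < t" "t \<le> l e"
  shows "lslope (edge_fun src tgt l (tent l P) e) t
           = (if e \<in> P then (if t \<le> l e/2 then 1/2 else -1/2) else 0)"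
proof (cases "e \<in> P")
  case False then show ?thesis using lslope_lin[OF assms(2) tent_lin0[OF False]] by simp
next
  case True
  show ?thesis
  proof (cases "t \<le> l e/2")
    case True2: True
    have "\<forall>x\<in>{0..t}. edge_fun src tgt l (tent l P) e x = (1/2)*x + 0"
      using tent_lin1[where l=l and e=e and P=P and src=src and tgt=tgt, OF assms(1) True] True2 by auto
    then have "lslope (edge_fun src tgt l (tent l P) e) t = 1/2" by (rule lslope_lin[OF assms(2)])
    then show ?thesis using True True2 by simp
  next
    case False
    have L2: "\<forall>x\<in>{l e/2..t}. edge_fun src tgt l (tent l P) e x = (-1/2)*x + l e/2"
      using tent_lin2[where l=l and e=e and P=P and src=src and tgt=tgt, OF assms(1) True] assms by auto
    have "lslope (edge_fun src tgt l (tent l P) e) t = -1/2" by (rule lslope_lin[of "l e/2" t, OF _ L2]) (use False in auto)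
    then show ?thesis using True False by simp
  qed
qed

lemma points_Vert: "Vert v \<in> points V E l \<longleftrightarrow> v \<in> V"
  unfolding points_def by auto

lemma points_EPt: "EPt e t \<in> points V E l \<longleftrightarrow> e \<in> E \<and> 0 < t \<and> t < l e"
  unfolding points_def by auto

lemma sum_if_card:
  assumes "finite A"
  shows "(\<Sum>e\<in>A. if e \<in> P then c else 0) = c * real (card (A \<inter> P))"
proof -
  have "(\<Sum>e\<in>A. if e \<in> P then c else 0) = (\<Sum>e\<in>A \<inter> P. c)"
    using assms by (simp add: sum.If_cases Int_def)
  then show ?thesis by simp
qed

lemma ord_tent:
  assumes fin: "finite E" and pos: "\<forall>e\<in>E. 0 < l e" and P: "P \<in> cycle_space V E src tgt"
    and p: "p \<in> points V E l"
  shows "ord E src tgt l (tent l P) p = of_int (F_div src tgt l P p)"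
proof (cases p)
  case (Vert v)
  have vV: "v \<in> V" using p Vert unfolding points_def by auto
  have PE: "P \<subseteq> E" and ev: "even (deg P src tgt v)" using P vV unfolding cycle_space_def by auto
  have s1: "(\<Sum>e\<in>{e\<in>E. src e = v}. rslope (edge_fun src tgt l (tent l P) e) 0)
      = (\<Sum>e\<in>{e\<in>E. src e = v}. if e \<in> P then 1/2 else 0)"
    by (rule sum.cong) (use pos in \<open>auto simp: tent_rslope\<close>)
  have s2: "(\<Sum>e\<in>{e\<in>E. tgt e = v}. - lslope (edge_fun src tgt l (tent l P) e) (l e))
      = (\<Sum>e\<in>{e\<in>E. tgt e = v}. if e \<in> P then 1/2 else 0)"
    by (rule sum.cong) (use pos in \<open>auto simp: tent_lslope\<close>)
  have c1: "{e\<in>E. src e = v} \<inter> P = {e\<in>P. src e = v}" using PE by auto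
  have c2: "{e\<in>E. tgt e = v} \<inter> P = {e\<in>P. tgt e = v}" using PE by auto
  have "ord E src tgt l (tent l P) p = real (deg P src tgt v) / 2"
    unfolding Vert ord.simps s1 s2 using fin
    by (simp add: sum_if_card c1 c2 deg_def)
  also have "\<dots> = of_int (F_div src tgt l P p)"
    using ev unfolding Vert F_div_def by (auto elim!: evenE)
  finally show ?thesis .
next
  case (EPt e t)
  have h: "e \<in> E" "0 < t" "t < l e" using p EPt unfolding points_def by auto
  then have le: "0 < l e" using pos by auto
  show ?thesis
    unfolding EPt ord.simps F_div_def
    using h le by (auto simp: tent_rslope tent_lslope)
qed

lemma ord_comb:
  assumes "\<forall>e\<in>E. pwl (l e) S1 (edge_fun src tgt l f e)"
    "\<forall>e\<in>E. pwl (l e) S2 (edge_fun src tgt l g e)"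
    "\<forall>e\<in>E. 0 < l e" "p \<in> points V E l"
  shows "ord E src tgt l (\<lambda>p. \<alpha> * f p + \<beta> * g p) p
     = \<alpha> * ord E src tgt l f p + \<beta> * ord E src tgt l g p"
proof (cases p)
  case (Vert v)
  have s1: "(\<Sum>e\<in>{e\<in>E. src e = v}. rslope (edge_fun src tgt l (\<lambda>p. \<alpha> * f p + \<beta> * g p) e) 0)
     = (\<Sum>e\<in>{e\<in>E. src e = v}. \<alpha> * rslope (edge_fun src tgt l f e) 0 + \<beta> * rslope (edge_fun src tgt l g e) 0)"
    by (rule sum.cong) (use assms in \<open>auto simp: edge_fun_comb intro!: rslope_comb\<close>)
  have s2: "(\<Sum>e\<in>{e\<in>E. tgt e = v}. - lslope (edge_fun src tgt l (\<lambda>p. \<alpha> * f p + \<beta> * g p) e) (l e))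
     = (\<Sum>e\<in>{e\<in>E. tgt e = v}. \<alpha> * (- lslope (edge_fun src tgt l f e) (l e)) + \<beta> * (- lslope (edge_fun src tgt l g e) (l e)))"
  proof (rule sum.cong[OF refl])
    fix e assume "e \<in> {e\<in>E. tgt e = v}"
    then have e: "e \<in> E" by simp
    then have "0 < l e" using assms by auto
    then show "- lslope (edge_fun src tgt l (\<lambda>p. \<alpha> * f p + \<beta> * g p) e) (l e)
       = \<alpha> * (- lslope (edge_fun src tgt l f e) (l e)) + \<beta> * (- lslope (edge_fun src tgt l g e) (l e))"
      unfolding edge_fun_comb using lslope_comb[of "l e" S1 "edge_fun src tgt l f e" S2 "edge_fun src tgt l g e" "l e" \<alpha> \<beta>] assms e
      by simp
  qed
  show ?thesis unfolding Vert ord.simps s1 s2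
    by (simp only: sum.distrib sum_distrib_left[symmetric]) (simp add: algebra_simps)
next
  case (EPt e t)
  have h: "e \<in> E" "0 < t" "t < l e" using assms(4) EPt unfolding points_def by auto
  show ?thesis unfolding EPt ord.simps edge_fun_comb
    using h assms rslope_comb[of "l e" S1 "edge_fun src tgt l f e" S2 "edge_fun src tgt l g e" t \<alpha> \<beta>]
      lslope_comb[of "l e" S1 "edge_fun src tgt l f e" S2 "edge_fun src tgt l g e" t \<alpha> \<beta>]
    by (simp add: algebra_simps)
qed

lemma rational_pwl:
  "rational_fun V E src tgt l f \<Longrightarrow> e \<in> E \<Longrightarrow> pwl (l e) (\<lambda>s. s \<in> \<int>) (edge_fun src tgt l f e)"
  unfolding rational_fun_def using int_pl_pwl by blast

lemma rat_comb:
  assumes "\<forall>e\<in>E. pwl (l e) S1 (edge_fun src tgt l f e)"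
    "\<forall>e\<in>E. pwl (l e) S2 (edge_fun src tgt l g e)"
    "\<forall>e\<in>E. 0 < l e" "\<And>x y. S1 x \<Longrightarrow> S2 y \<Longrightarrow> \<alpha>*x+\<beta>*y \<in> \<int>"
  shows "rational_fun V E src tgt l (\<lambda>p. \<alpha> * f p + \<beta> * g p)"
  unfolding rational_fun_def edge_fun_comb
  using assms by (auto intro!: pwl_int_pl pwl_comb)



lemma divisor_comb:
  assumes "is_divisor V E l A" "is_divisor V E l B"
  shows "is_divisor V E l (\<lambda>p. a * A p + b * B p)"
proof -
  have "{p. a * A p + b * B p \<noteq> 0} \<subseteq> {p. A p \<noteq> 0} \<union> {p. B p \<noteq> 0}" by auto
  then show ?thesis using assms unfolding is_divisor_def by (meson finite_UnI finite_subset le_sup_iff order_trans)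
qed

lemma principal_comb:
  assumes pos: "\<forall>e\<in>E. 0 < l e" and A: "principal V E src tgt l A" and B: "principal V E src tgt l B"
  shows "principal V E src tgt l (\<lambda>p. a * A p + b * B p)"
proof -
  obtain f where f: "rational_fun V E src tgt l f" "\<forall>p \<in> points V E l. of_int (A p) = ord E src tgt l f p"
    using A unfolding principal_def by blast
  obtain g where g: "rational_fun V E src tgt l g" "\<forall>p \<in> points V E l. of_int (B p) = ord E src tgt l g p"
    using B unfolding principal_def by blast
  have pf: "\<forall>e\<in>E. pwl (l e) (\<lambda>s. s \<in> \<int>) (edge_fun src tgt l f e)" using rational_pwl[OF f(1)] by blast
  have pg: "\<forall>e\<in>E. pwl (l e) (\<lambda>s. s \<in> \<int>) (edge_fun src tgt l g e)" using rational_pwl[OF g(1)] by blast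
  have r: "rational_fun V E src tgt l (\<lambda>p. of_int a * f p + of_int b * g p)"
    by (rule rat_comb[OF pf pg pos]) (intro Ints_add Ints_mult Ints_of_int; assumption)
  have "\<forall>p \<in> points V E l. of_int (a * A p + b * B p) = ord E src tgt l (\<lambda>p. of_int a * f p + of_int b * g p) p"
  proof
    fix p assume p: "p \<in> points V E l"
    have "ord E src tgt l (\<lambda>p. of_int a * f p + of_int b * g p) p = of_int a * ord E src tgt l f p + of_int b * ord E src tgt l g p"
      by (rule ord_comb[OF pf pg pos p])
    also have "\<dots> = of_int (a * A p + b * B p)" using f(2) g(2) p by simp
    finally show "of_int (a * A p + b * B p) = ord E src tgt l (\<lambda>p. of_int a * f p + of_int b * g p) p" by simp
  qed
  then show ?thesis using r divisor_comb A B unfolding principal_def by blast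
qed

lemma principal_cong: "principal V E src tgt l A \<Longrightarrow> (\<And>p. A p = B p) \<Longrightarrow> principal V E src tgt l B"
proof -
  assume "principal V E src tgt l A" "\<And>p. A p = B p"
  moreover have "A = B" using \<open>\<And>p. A p = B p\<close> by auto
  ultimately show ?thesis by simp
qed

lemma principal_zero:
  assumes pos: "\<forall>e\<in>E. 0 < l e"
  shows "principal V E src tgt l (\<lambda>p. 0)"
proof -
  have ef: "edge_fun src tgt l (\<lambda>p. 0) e = (\<lambda>t. 0)" for e unfolding edge_fun_def by auto
  have z: "\<forall>x\<in>{a..b}. (\<lambda>t::real. 0::real) x = 0 * x + 0" for a b :: real by simp
  have rs: "rslope (\<lambda>t. 0) t = 0" for t using rslope_lin[OF _ z, of t "t+1"] by simp
  have ls: "lslope (\<lambda>t. 0) t = 0" for t using lslope_lin[OF _ z, of "t - 1" t] by simp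
  have "pwl L (\<lambda>s. s \<in> \<int>) (\<lambda>t. 0)" for L unfolding pwl_def
    by (intro exI[of _ "{}"]) (auto intro!: exI[of _ 0])
  then have ip: "int_pl L (\<lambda>t. 0)" if "0 < L" for L using pwl_int_pl that by blast
  have r: "rational_fun V E src tgt l (\<lambda>p. 0)"
    unfolding rational_fun_def ef using ip pos by blast
  have o: "ord E src tgt l (\<lambda>p. 0) p = 0" for p
    by (cases p) (simp_all add: ef rs ls)
  show ?thesis unfolding principal_def is_divisor_def using r o by auto
qed

lemma self_in_class:
  assumes "\<forall>e\<in>E. 0 < l e" "is_divisor V E l D"
  shows "D \<in> div_class V E src tgt l D"
  unfolding div_class_def using assms principal_zero[OF assms(1)] by simp

lemma class_eq:
  assumes pos: "\<forall>e\<in>E. 0 < l e" and pr: "principal V E src tgt l (\<lambda>p. D p - D' p)"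
  shows "div_class V E src tgt l D = div_class V E src tgt l D'"
proof (rule set_eqI)
  fix X
  have 1: "principal V E src tgt l (\<lambda>p. D' p - X p)" if "principal V E src tgt l (\<lambda>p. D p - X p)"
  proof -
    have "principal V E src tgt l (\<lambda>p. 1 * (D p - X p) + (-1) * (D p - D' p))"
      by (rule principal_comb[OF pos that pr])
    then show ?thesis by (rule principal_cong) simp
  qed
  have 2: "principal V E src tgt l (\<lambda>p. D p - X p)" if "principal V E src tgt l (\<lambda>p. D' p - X p)"
  proof -
    have "principal V E src tgt l (\<lambda>p. 1 * (D' p - X p) + 1 * (D p - D' p))"
      by (rule principal_comb[OF pos that pr])
    then show ?thesis by (rule principal_cong) simp
  qed
  show "X \<in> div_class V E src tgt l D \<longleftrightarrow> X \<in> div_class V E src tgt l D'"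
    unfolding div_class_def using 1 2 by blast
qed

lemma F_divisor:
  assumes fin: "finite V" "finite E" and se: "\<forall>e\<in>E. src e \<in> V \<and> tgt e \<in> V"
    and pos: "\<forall>e\<in>E. 0 < l e" and P: "P \<in> cycle_space V E src tgt"
  shows "{p. F_div src tgt l P p \<noteq> 0} \<subseteq> points V E l \<inter> (Vert ` V \<union> (\<lambda>e. EPt e (l e / 2)) ` E)"
proof
  have PE: "P \<subseteq> E" using P unfolding cycle_space_def by auto
  fix p assume "p \<in> {p. F_div src tgt l P p \<noteq> 0}"
  then have nz: "F_div src tgt l P p \<noteq> 0" by simp
  show "p \<in> points V E l \<inter> (Vert ` V \<union> (\<lambda>e. EPt e (l e / 2)) ` E)"
  proof (cases p)
    case (Vert v)
    then have "deg P src tgt v \<noteq> 0" using nz unfolding F_div_def by auto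
    then have "{e\<in>P. src e = v} \<noteq> {} \<or> {e\<in>P. tgt e = v} \<noteq> {}" unfolding deg_def by (metis add_0 card.empty)
    then have "v \<in> V" using PE se by blast
    then show ?thesis using Vert unfolding points_def by auto
  next
    case (EPt e t)
    then have "e \<in> P" "t = l e / 2" using nz unfolding F_div_def by (auto split: if_splits)
    moreover have "0 < l e" using \<open>e \<in> P\<close> PE pos by auto
    ultimately show ?thesis using EPt PE unfolding points_def by auto
  qed
qed

lemma F_is_divisor:
  assumes fin: "finite V" "finite E" and se: "\<forall>e\<in>E. src e \<in> V \<and> tgt e \<in> V"
    and pos: "\<forall>e\<in>E. 0 < l e" and P: "P \<in> cycle_space V E src tgt"
  shows "is_divisor V E l (F_div src tgt l P)"
proof -
  have "finite (Vert ` V \<union> (\<lambda>e. EPt e (l e / 2)) ` E)" using fin by simp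
  moreover have sub: "{p. F_div src tgt l P p \<noteq> 0} \<subseteq> points V E l \<inter> (Vert ` V \<union> (\<lambda>e. EPt e (l e / 2)) ` E)"
    by (rule F_divisor[OF assms])
  ultimately have "finite {p. F_div src tgt l P p \<noteq> 0}" using finite_subset by blast
  moreover have "{p. F_div src tgt l P p \<noteq> 0} \<subseteq> points V E l" using sub by blast
  ultimately show ?thesis unfolding is_divisor_def by blast
qed

lemma two_half_int: "x \<in> {-1/2, 0, 1/2::real} \<Longrightarrow> 2 * x + 0 * y \<in> \<int>"
proof -
  assume "x \<in> {-1/2, 0, 1/2::real}"
  then have "2*x + 0*y = of_int (-1) \<or> 2*x + 0*y = of_int 0 \<or> 2*x + 0*y = of_int 1" by auto
  then show ?thesis by (elim disjE) (simp only: Ints_of_int)+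
qed

lemma tent_pwl_all:
  "\<forall>e\<in>E. 0 < l e \<Longrightarrow> \<forall>e\<in>E. pwl (l e) (\<lambda>s. s \<in> {-1/2, 0, 1/2}) (edge_fun src tgt l (tent l P) e)"
proof (intro ballI)
  fix e assume "\<forall>e\<in>E. 0 < l e" "e \<in> E"
  then have "0 < l e" by blast
  then show "pwl (l e) (\<lambda>s. s \<in> {-1/2, 0, 1/2}) (edge_fun src tgt l (tent l P) e)" by (rule tent_pwl)
qed

lemma twoF_principal:
  assumes fin: "finite V" "finite E" and se: "\<forall>e\<in>E. src e \<in> V \<and> tgt e \<in> V"
    and pos: "\<forall>e\<in>E. 0 < l e" and P: "P \<in> cycle_space V E src tgt"
  shows "principal V E src tgt l (\<lambda>p. 2 * F_div src tgt l P p)"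
proof -
  note tp = tent_pwl_all[OF pos, of src tgt P]
  have r: "rational_fun V E src tgt l (\<lambda>p. 2 * tent l P p + 0 * tent l P p)"
    by (rule rat_comb[OF tp tp pos]) (rule two_half_int)
  have "\<forall>p\<in>points V E l. of_int (2 * F_div src tgt l P p) = ord E src tgt l (\<lambda>p. 2 * tent l P p + 0 * tent l P p) p"
  proof
    fix p assume p: "p \<in> points V E l"
    have "ord E src tgt l (\<lambda>p. 2 * tent l P p + 0 * tent l P p) p = 2 * ord E src tgt l (tent l P) p + 0 * ord E src tgt l (tent l P) p"
      by (rule ord_comb[OF tp tp pos p])
    then show "of_int (2 * F_div src tgt l P p) = ord E src tgt l (\<lambda>p. 2 * tent l P p + 0 * tent l P p) p"
      using ord_tent[OF fin(2) pos P p] by simp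
  qed
  moreover have "is_divisor V E l (\<lambda>p. 2 * F_div src tgt l P p + 0 * F_div src tgt l P p)"
    using divisor_comb F_is_divisor[OF assms] by blast
  ultimately show ?thesis unfolding principal_def using r by auto
qed

lemma half_not_int: "(x::real) \<in> \<int> \<Longrightarrow> x = 1/2 \<or> x = -1/2 \<Longrightarrow> False"
proof -
  assume "x \<in> \<int>" "x = 1/2 \<or> x = -1/2"
  then obtain k where k: "x = of_int k" by (auto elim: Ints_cases)
  then have "of_int (2*k) = (1::real) \<or> of_int (2*k) = (-1::real)" using \<open>x = 1/2 \<or> x = -1/2\<close> by auto
  then have "2*k = 1 \<or> 2*k = -1" by linarith
  then show False by presburger
qed



lemma sum_fiber:
  fixes F :: "'v \<Rightarrow> real" and g :: "'e \<Rightarrow> real"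
  assumes "finite V" "finite E" "\<forall>e\<in>E. h e \<in> V"
  shows "(\<Sum>v\<in>V. F v * (\<Sum>e\<in>{e\<in>E. h e = v}. g e)) = (\<Sum>e\<in>E. F (h e) * g e)"
proof -
  have "(\<Sum>v\<in>V. F v * (\<Sum>e\<in>{e\<in>E. h e = v}. g e)) = (\<Sum>v\<in>V. (\<Sum>e\<in>{e\<in>E. h e = v}. F (h e) * g e))"
  proof (rule sum.cong[OF refl])
    fix v assume "v \<in> V"
    have "F v * (\<Sum>e\<in>{e\<in>E. h e = v}. g e) = (\<Sum>e\<in>{e\<in>E. h e = v}. F v * g e)"
      by (rule sum_distrib_left)
    also have "\<dots> = (\<Sum>e\<in>{e\<in>E. h e = v}. F (h e) * g e)" by (rule sum.cong) auto
    finally show "F v * (\<Sum>e\<in>{e\<in>E. h e = v}. g e) = (\<Sum>e\<in>{e\<in>E. h e = v}. F (h e) * g e)" .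
  qed
  also have "\<dots> = (\<Sum>e\<in>E. F (h e) * g e)"
    by (rule sum.group) (use assms in auto)
  finally show ?thesis .
qed

lemma edge_lin:
  assumes pu: "pwl L S \<phi>" and L: "0 < L"
    and int: "\<And>t. 0 < t \<Longrightarrow> t < L \<Longrightarrow> rslope \<phi> t = lslope \<phi> t"
  shows "\<phi> L = rslope \<phi> 0 * L + \<phi> 0 \<and> lslope \<phi> L = rslope \<phi> 0"
proof -
  define \<sigma> where "\<sigma> = rslope \<phi> 0"
  define Pr where "Pr t \<longleftrightarrow> (\<forall>x\<in>{0..t}. \<phi> x = \<sigma> * x + \<phi> 0 \<and> (0 < x \<longrightarrow> lslope \<phi> x = \<sigma>))" for t
  have "\<forall>t\<in>{0..L}. Pr t"
  proof (rule pwl_chain[OF pu L])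
    show "Pr 0" unfolding Pr_def by auto
  next
    fix a b s c assume h: "0 \<le> a" "a < b" "b \<le> L" "\<forall>x\<in>{a..b}. \<phi> x = s * x + c" "Pr a"
    have rs: "rslope \<phi> a = s" by (rule rslope_lin[OF h(2) h(4)])
    have ss: "s = \<sigma>"
    proof (cases "a = 0")
      case True then show ?thesis using rs unfolding \<sigma>_def by simp
    next
      case False
      then have a0: "0 < a" using h(1) by simp
      have a1: "a \<in> {0..a}" using h(1) by simp
      have "\<phi> a = \<sigma> * a + \<phi> 0 \<and> (0 < a \<longrightarrow> lslope \<phi> a = \<sigma>)" using bspec[OF h(5)[unfolded Pr_def] a1] .
      then have "lslope \<phi> a = \<sigma>" using a0 by simp
      moreover have "rslope \<phi> a = lslope \<phi> a" by (rule int) (use a0 h(2,3) in linarith)+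
      ultimately show ?thesis using rs by simp
    qed
    have aa: "a \<in> {a..b}" "a \<in> {0..a}" using h(1,2) by auto
    have "\<phi> a = s * a + c" using bspec[OF h(4) aa(1)] .
    moreover have "\<phi> a = \<sigma> * a + \<phi> 0" using bspec[OF h(5)[unfolded Pr_def] aa(2)] by (rule conjunct1)
    moreover have "s * a = \<sigma> * a" using ss by simp
    ultimately have cc: "c = \<phi> 0" by linarith
    show "\<forall>t\<in>{a..b}. Pr t"
    proof (intro ballI)
      fix t assume t: "t \<in> {a..b}"
      show "Pr t" unfolding Pr_def
      proof (intro ballI)
        fix x assume x: "x \<in> {0..t}"
        show "\<phi> x = \<sigma> * x + \<phi> 0 \<and> (0 < x \<longrightarrow> lslope \<phi> x = \<sigma>)"
        proof (cases "x \<le> a")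
          case True
          then have "x \<in> {0..a}" using x by simp
          then show ?thesis using bspec[OF h(5)[unfolded Pr_def]] by blast
        next
          case False
          have lx: "\<forall>y\<in>{a..x}. \<phi> y = s * y + c" using h(4) x t by auto
          have "lslope \<phi> x = s" using lslope_lin[of a x, OF _ lx] False by simp
          moreover have "\<phi> x = s * x + c" using lx False by auto
          ultimately show ?thesis using ss cc by simp
        qed
      qed
    qed
  qed
  then have "Pr L" using L by auto
  moreover have "L \<in> {0..L}" using L by simp
  ultimately have "\<phi> L = \<sigma> * L + \<phi> 0 \<and> (0 < L \<longrightarrow> lslope \<phi> L = \<sigma>)"
    unfolding Pr_def by blast
  then show ?thesis unfolding \<sigma>_def using L by simp
qed

lemma inj_part:
  fixes V :: "'v set" and E :: "'e set"
  assumes fin: "finite V" "finite E" and se: "\<forall>e\<in>E. src e \<in> V \<and> tgt e \<in> V"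
    and pos: "\<forall>e\<in>E. 0 < l e" and P: "P \<in> cycle_space V E src tgt" and Q: "Q \<in> cycle_space V E src tgt"
    and eq: "div_class V E src tgt l (F_div src tgt l P) = div_class V E src tgt l (F_div src tgt l Q)"
  shows "P = Q"
proof (rule ccontr)
  assume ne: "P \<noteq> Q"
  have PE: "P \<subseteq> E" "Q \<subseteq> E" using P Q unfolding cycle_space_def by auto
  have "F_div src tgt l Q \<in> div_class V E src tgt l (F_div src tgt l P)"
    using self_in_class[OF pos F_is_divisor[OF fin se pos Q]] eq by simp
  then obtain f where f: "rational_fun V E src tgt l f"
    "\<forall>p\<in>points V E l. of_int (F_div src tgt l P p - F_div src tgt l Q p) = ord E src tgt l f p"
    unfolding div_class_def principal_def by blast
  note tP = tent_pwl_all[OF pos, of src tgt P]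
  note tQ = tent_pwl_all[OF pos, of src tgt Q]
  have pf: "\<forall>e\<in>E. pwl (l e) (\<lambda>s. s \<in> \<int>) (edge_fun src tgt l f e)" using rational_pwl[OF f(1)] by blast
  define w where "w = (\<lambda>p::('v,'e) pt. (-1) * tent l P p + 1 * tent l Q p)"
  have pw: "\<forall>e\<in>E. pwl (l e) (\<lambda>_. True) (edge_fun src tgt l w e)"
  proof
    fix e assume e: "e \<in> E"
    show "pwl (l e) (\<lambda>_. True) (edge_fun src tgt l w e)" unfolding w_def edge_fun_comb
      by (rule pwl_comb[OF tP[rule_format, OF e] tQ[rule_format, OF e]]) simp
  qed
  define u where "u = (\<lambda>p. 1 * f p + 1 * w p)"
  have pu: "\<forall>e\<in>E. pwl (l e) (\<lambda>_. True) (edge_fun src tgt l u e)"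
  proof
    fix e assume e: "e \<in> E"
    show "pwl (l e) (\<lambda>_. True) (edge_fun src tgt l u e)" unfolding u_def edge_fun_comb
      by (rule pwl_comb[OF pf[rule_format, OF e] pw[rule_format, OF e]]) simp
  qed
  have ordu: "ord E src tgt l u p = 0" if p: "p \<in> points V E l" for p
  proof -
    have "ord E src tgt l w p = (-1) * ord E src tgt l (tent l P) p + 1 * ord E src tgt l (tent l Q) p"
      unfolding w_def by (rule ord_comb[OF tP tQ pos p])
    also have "\<dots> = - of_int (F_div src tgt l P p) + of_int (F_div src tgt l Q p)"
      using ord_tent[OF fin(2) pos P p] ord_tent[OF fin(2) pos Q p] by simp
    finally have ow: "ord E src tgt l w p = - of_int (F_div src tgt l P p) + of_int (F_div src tgt l Q p)" .
    have "ord E src tgt l u p = 1 * ord E src tgt l f p + 1 * ord E src tgt l w p"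
      unfolding u_def by (rule ord_comb[OF pf pw pos p])
    moreover have "ord E src tgt l f p = of_int (F_div src tgt l P p) - of_int (F_div src tgt l Q p)"
      using f(2) p by simp
    ultimately show ?thesis using ow by simp
  qed
  define \<sigma> where "\<sigma> e = rslope (edge_fun src tgt l u e) 0" for e
  have lin: "edge_fun src tgt l u e (l e) = \<sigma> e * l e + edge_fun src tgt l u e 0
      \<and> lslope (edge_fun src tgt l u e) (l e) = \<sigma> e" if e: "e \<in> E" for e
    unfolding \<sigma>_def
  proof (rule edge_lin[OF pu[rule_format, OF e]])
    show "0 < l e" using pos e by auto
    fix t assume t: "0 < t" "t < l e"
    have "EPt e t \<in> points V E l" using e t unfolding points_def by auto
    from ordu[OF this] show "rslope (edge_fun src tgt l u e) t = lslope (edge_fun src tgt l u e) t" by simp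
  qed
  define U where "U v = u (Vert v)" for v
  have e0: "edge_fun src tgt l u e 0 = U (src e)" for e unfolding edge_fun_def U_def by simp
  have eL: "edge_fun src tgt l u e (l e) = U (tgt e)" if "e \<in> E" for e
    using pos that unfolding edge_fun_def U_def by auto
  have vert: "(\<Sum>e\<in>{e\<in>E. src e = v}. \<sigma> e) - (\<Sum>e\<in>{e\<in>E. tgt e = v}. \<sigma> e) = 0" if v: "v \<in> V" for v
  proof -
    have "Vert v \<in> points V E l" using v unfolding points_def by auto
    from ordu[OF this] have "(\<Sum>e\<in>{e\<in>E. src e = v}. \<sigma> e) + (\<Sum>e\<in>{e\<in>E. tgt e = v}. - lslope (edge_fun src tgt l u e) (l e)) = 0"
      unfolding \<sigma>_def by simp
    moreover have "(\<Sum>e\<in>{e\<in>E. tgt e = v}. - lslope (edge_fun src tgt l u e) (l e)) = (\<Sum>e\<in>{e\<in>E. tgt e = v}. - \<sigma> e)"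
      by (rule sum.cong[OF refl]) (use lin in auto)
    ultimately show ?thesis by (simp add: sum_negf)
  qed
  have "(\<Sum>v\<in>V. U v * ((\<Sum>e\<in>{e\<in>E. src e = v}. \<sigma> e) - (\<Sum>e\<in>{e\<in>E. tgt e = v}. \<sigma> e))) = 0"
    using vert by simp
  then have "(\<Sum>v\<in>V. U v * (\<Sum>e\<in>{e\<in>E. src e = v}. \<sigma> e)) - (\<Sum>v\<in>V. U v * (\<Sum>e\<in>{e\<in>E. tgt e = v}. \<sigma> e)) = 0"
    by (simp add: right_diff_distrib sum_subtractf)
  then have "(\<Sum>e\<in>E. U (src e) * \<sigma> e) - (\<Sum>e\<in>E. U (tgt e) * \<sigma> e) = 0"
    using sum_fiber[OF fin, of src U \<sigma>] sum_fiber[OF fin, of tgt U \<sigma>] se by simp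
  then have "(\<Sum>e\<in>E. (U (src e) - U (tgt e)) * \<sigma> e) = 0"
    by (simp add: left_diff_distrib sum_subtractf)
  moreover have "(\<Sum>e\<in>E. (U (src e) - U (tgt e)) * \<sigma> e) = - (\<Sum>e\<in>E. \<sigma> e * \<sigma> e * l e)"
  proof -
    have "(\<Sum>e\<in>E. (U (src e) - U (tgt e)) * \<sigma> e) = (\<Sum>e\<in>E. - (\<sigma> e * \<sigma> e * l e))"
    proof (rule sum.cong[OF refl])
      fix e assume e: "e \<in> E"
      have "U (tgt e) = \<sigma> e * l e + U (src e)" using lin[OF e] eL[OF e] e0[of e] by simp
      then show "(U (src e) - U (tgt e)) * \<sigma> e = - (\<sigma> e * \<sigma> e * l e)" by (simp add: algebra_simps)
    qed
    then show ?thesis by (simp add: sum_negf)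
  qed
  ultimately have "(\<Sum>e\<in>E. \<sigma> e * \<sigma> e * l e) = 0" by simp
  moreover have nn: "\<And>e. e \<in> E \<Longrightarrow> 0 \<le> \<sigma> e * \<sigma> e * l e" using pos by (simp add: less_imp_le)
  ultimately have z: "\<forall>e\<in>E. \<sigma> e * \<sigma> e * l e = 0" using sum_nonneg_eq_0_iff[OF fin(2) nn] by simp
  obtain e where e0': "\<not> (e \<in> P \<longleftrightarrow> e \<in> Q)" using ne by (auto simp: set_eq_iff)
  then have e: "e \<in> E" "e \<in> P \<longleftrightarrow> e \<notin> Q" using PE by auto
  have le: "0 < l e" using pos e by auto
  have s0: "\<sigma> e = 0" using z e le by auto
  have rf: "rslope (edge_fun src tgt l f e) 0 \<in> \<int>"
    using pwl_rslope[OF pf[rule_format, OF e(1)], of 0] le by auto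
  have "\<sigma> e = 1 * rslope (edge_fun src tgt l f e) 0 + 1 * rslope (edge_fun src tgt l w e) 0"
    unfolding \<sigma>_def u_def edge_fun_comb
    by (rule rslope_comb[OF pf[rule_format, OF e(1)] pw[rule_format, OF e(1)]]) (use le in auto)
  moreover have "rslope (edge_fun src tgt l w e) 0 = (-1) * rslope (edge_fun src tgt l (tent l P) e) 0 + 1 * rslope (edge_fun src tgt l (tent l Q) e) 0"
    unfolding w_def edge_fun_comb
    by (rule rslope_comb[OF tP[rule_format, OF e(1)] tQ[rule_format, OF e(1)]]) (use le in auto)
  ultimately have "rslope (edge_fun src tgt l f e) 0 = (if e \<in> P then 1/2 else 0) - (if e \<in> Q then 1/2 else 0)"
    using s0 tent_rslope[where l=l and e=e and t=0 and src=src and tgt=tgt and P=P, OF le] tent_rslope[where l=l and e=e and t=0 and src=src and tgt=tgt and P=Q, OF le] le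
    by (simp split: if_splits; linarith)
  then have "rslope (edge_fun src tgt l f e) 0 = 1/2 \<or> rslope (edge_fun src tgt l f e) 0 = -1/2"
    using e(2) by auto
  then show False using half_not_int[OF rf] by simp
qed



lemma sum_parity:
  fixes x \<epsilon> :: "'e \<Rightarrow> real"
  assumes "finite S" "\<forall>e\<in>S. \<exists>k::int. x e = 2 * of_int k + \<epsilon> e"
  shows "\<exists>K::int. sum x S = 2 * of_int K + sum \<epsilon> S"
  using assms
proof (induction S rule: finite_induct)
  case empty then show ?case by (intro exI[of _ 0]) simp
next
  case (insert a F)
  obtain K where K: "sum x F = 2 * of_int K + sum \<epsilon> F" using insert by auto
  obtain k where k: "x a = 2 * of_int k + \<epsilon> a" using insert by auto
  show ?case using insert(1,2) K k by (intro exI[of _ "K + k"]) (simp add: algebra_simps)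
qed

lemma int_even_odd:
  fixes r :: real
  assumes "r \<in> \<int>"
  shows "(\<exists>k::int. r = 2 * of_int k + 1) \<or> (\<exists>k::int. r = 2 * of_int k)"
proof -
  obtain m where m: "r = of_int m" using assms Ints_cases by blast
  have "m = 2 * (m div 2) + m mod 2" by simp
  moreover have "m mod 2 = 0 \<or> m mod 2 = 1" by auto
  ultimately have "m = 2 * (m div 2) + 1 \<or> m = 2 * (m div 2)" by auto
  then show ?thesis using m by (metis of_int_add of_int_mult of_int_1 of_int_numeral)
qed

lemma edge_parity:
  assumes pu: "pwl L S \<phi>" and L: "0 < L"
    and int: "\<And>t. 0 < t \<Longrightarrow> t < L \<Longrightarrow> \<exists>k::int. rslope \<phi> t - lslope \<phi> t = 2 * of_int k"
  shows "(\<forall>t. 0 \<le> t \<longrightarrow> t < L \<longrightarrow> (\<exists>k::int. rslope \<phi> t = rslope \<phi> 0 + 2 * of_int k))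
     \<and> (\<exists>k::int. lslope \<phi> L = rslope \<phi> 0 + 2 * of_int k)"
proof -
  define r where "r = rslope \<phi> 0"
  define Pr where "Pr t \<longleftrightarrow> (\<forall>x\<in>{0..t}. 0 < x \<longrightarrow> (\<exists>k::int. lslope \<phi> x = r + 2 * of_int k))" for t
  have all: "\<forall>t\<in>{0..L}. Pr t"
  proof (rule pwl_chain[OF pu L])
    show "Pr 0" unfolding Pr_def by auto
  next
    fix a b s c assume h: "0 \<le> a" "a < b" "b \<le> L" "\<forall>x\<in>{a..b}. \<phi> x = s * x + c" "Pr a"
    have rs: "rslope \<phi> a = s" by (rule rslope_lin[OF h(2) h(4)])
    have ss: "\<exists>k::int. s = r + 2 * of_int k"
    proof (cases "a = 0")
      case True then show ?thesis using rs unfolding r_def by (intro exI[of _ 0]) simp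
    next
      case False
      then have a0: "0 < a" using h(1) by simp
      have a1: "a \<in> {0..a}" using h(1) by simp
      obtain k where k: "lslope \<phi> a = r + 2 * of_int k" using bspec[OF h(5)[unfolded Pr_def] a1] a0 by blast
      obtain k' where k': "rslope \<phi> a - lslope \<phi> a = 2 * of_int k'" using int[of a] a0 h(2,3) by auto
      show ?thesis using k k' rs by (intro exI[of _ "k + k'"]) (simp add: algebra_simps)
    qed
    show "\<forall>t\<in>{a..b}. Pr t"
    proof (intro ballI)
      fix t assume t: "t \<in> {a..b}"
      show "Pr t" unfolding Pr_def
      proof (intro ballI impI)
        fix x assume x: "x \<in> {0..t}" "0 < x"
        show "\<exists>k::int. lslope \<phi> x = r + 2 * of_int k"
        proof (cases "x \<le> a")
          case True
          then have "x \<in> {0..a}" using x by simp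
          then show ?thesis using bspec[OF h(5)[unfolded Pr_def]] x(2) by blast
        next
          case False
          have lx: "\<forall>y\<in>{a..x}. \<phi> y = s * y + c" using h(4) x t by auto
          have "lslope \<phi> x = s" using lslope_lin[of a x, OF _ lx] False by simp
          then show ?thesis using ss by simp
        qed
      qed
    qed
  qed
  have A: "\<exists>k::int. rslope \<phi> t = rslope \<phi> 0 + 2 * of_int k" if t: "0 \<le> t" "t < L" for t
  proof (cases "t = 0")
    case True then show ?thesis by (intro exI[of _ 0]) simp
  next
    case False
    then have t0: "0 < t" using t by simp
    have "Pr t" using all t by auto
    moreover have "t \<in> {0..t}" using t by simp
    ultimately obtain k where k: "lslope \<phi> t = r + 2 * of_int k" unfolding Pr_def using t0 by blast
    obtain k' where k': "rslope \<phi> t - lslope \<phi> t = 2 * of_int k'" using int[OF t0 t(2)] by auto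
    show ?thesis using k k' unfolding r_def by (intro exI[of _ "k + k'"]) (simp add: algebra_simps)
  qed
  have "Pr L" using all L by auto
  moreover have "L \<in> {0..L}" using L by simp
  ultimately have B: "\<exists>k::int. lslope \<phi> L = r + 2 * of_int k" unfolding Pr_def using L by blast
  show ?thesis using A B unfolding r_def by blast
qed

lemma surj_part:
  fixes V :: "'v set" and E :: "'e set"
  assumes fin: "finite V" "finite E" and se: "\<forall>e\<in>E. src e \<in> V \<and> tgt e \<in> V"
    and pos: "\<forall>e\<in>E. 0 < l e" and D: "is_divisor V E l D" and D2: "principal V E src tgt l (\<lambda>p. 2 * D p)"
  shows "\<exists>P\<in>cycle_space V E src tgt. div_class V E src tgt l D = div_class V E src tgt l (F_div src tgt l P)"
proof -
  obtain g where g: "rational_fun V E src tgt l g"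
    "\<forall>p\<in>points V E l. of_int (2 * D p) = ord E src tgt l g p"
    using D2 unfolding principal_def by blast
  have pg: "\<forall>e\<in>E. pwl (l e) (\<lambda>s. s \<in> \<int>) (edge_fun src tgt l g e)" using rational_pwl[OF g(1)] by blast
  define r where "r e = rslope (edge_fun src tgt l g e) 0" for e
  define P where "P = {e\<in>E. \<exists>k::int. r e = 2 * of_int k + 1}"
  define \<epsilon> where "\<epsilon> e = (if e \<in> P then 1 else 0 :: real)" for e
  have PE: "P \<subseteq> E" unfolding P_def by auto
  have rint: "r e \<in> \<int>" if e: "e \<in> E" for e
  proof -
    have "0 < l e" using pos e by auto
    then show ?thesis using pwl_rslope[OF pg[rule_format, OF e], of 0] unfolding r_def by auto
  qed
  have rpar: "\<exists>k::int. r e = 2 * of_int k + \<epsilon> e" if e: "e \<in> E" for e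
  proof (cases "e \<in> P")
    case True then show ?thesis unfolding P_def \<epsilon>_def by auto
  next
    case False
    then have "\<not> (\<exists>k::int. r e = 2 * of_int k + 1)" using e unfolding P_def by auto
    then obtain k :: int where "r e = 2 * of_int k" using int_even_odd[OF rint[OF e]] by blast
    then show ?thesis using False unfolding \<epsilon>_def by auto
  qed
  have par: "(\<forall>t. 0 \<le> t \<longrightarrow> t < l e \<longrightarrow> (\<exists>k::int. rslope (edge_fun src tgt l g e) t = 2 * of_int k + \<epsilon> e))
     \<and> (\<exists>k::int. lslope (edge_fun src tgt l g e) (l e) = 2 * of_int k + \<epsilon> e)" if e: "e \<in> E" for e
  proof -
    have le: "0 < l e" using pos e by auto
    have int: "\<exists>k::int. rslope (edge_fun src tgt l g e) t - lslope (edge_fun src tgt l g e) t = 2 * of_int k"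
      if t: "0 < t" "t < l e" for t
    proof -
      have "EPt e t \<in> points V E l" using e t unfolding points_def by auto
      then have "of_int (2 * D (EPt e t)) = ord E src tgt l g (EPt e t)" using g(2) by blast
      then show ?thesis by (intro exI[of _ "D (EPt e t)"]) simp
    qed
    have EP: "(\<forall>t. 0 \<le> t \<longrightarrow> t < l e \<longrightarrow> (\<exists>k::int. rslope (edge_fun src tgt l g e) t = r e + 2 * of_int k))
     \<and> (\<exists>k::int. lslope (edge_fun src tgt l g e) (l e) = r e + 2 * of_int k)"
      unfolding r_def by (rule edge_parity[OF pg[rule_format, OF e] le int])
    obtain k0 where k0: "r e = 2 * of_int k0 + \<epsilon> e" using rpar[OF e] by blast
    show ?thesis
    proof (intro conjI allI impI)
      fix t assume t: "0 \<le> t" "t < l e"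
      obtain k where "rslope (edge_fun src tgt l g e) t = r e + 2 * of_int k" using EP t by blast
      then show "\<exists>k::int. rslope (edge_fun src tgt l g e) t = 2 * of_int k + \<epsilon> e"
        using k0 by (intro exI[of _ "k + k0"]) (simp add: algebra_simps)
    next
      obtain k where "lslope (edge_fun src tgt l g e) (l e) = r e + 2 * of_int k" using EP by blast
      then show "\<exists>k::int. lslope (edge_fun src tgt l g e) (l e) = 2 * of_int k + \<epsilon> e"
        using k0 by (intro exI[of _ "k + k0"]) (simp add: algebra_simps)
    qed
  qed
  have Pcyc: "P \<in> cycle_space V E src tgt"
    unfolding cycle_space_def
  proof (intro CollectI conjI PE ballI)
    fix v assume v: "v \<in> V"
    have "Vert v \<in> points V E l" using v unfolding points_def by auto
    then have o: "of_int (2 * D (Vert v)) = (\<Sum>e\<in>{e\<in>E. src e = v}. r e)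
        + (\<Sum>e\<in>{e\<in>E. tgt e = v}. - lslope (edge_fun src tgt l g e) (l e))"
      using g(2) unfolding r_def by simp
    have f1: "finite {e\<in>E. src e = v}" "finite {e\<in>E. tgt e = v}" using fin(2) by auto
    obtain K1 where K1: "(\<Sum>e\<in>{e\<in>E. src e = v}. r e) = 2 * of_int K1 + (\<Sum>e\<in>{e\<in>E. src e = v}. \<epsilon> e)"
      using sum_parity[OF f1(1), of r \<epsilon>] rpar by auto
    have "\<forall>e\<in>{e\<in>E. tgt e = v}. \<exists>k::int. - lslope (edge_fun src tgt l g e) (l e) = 2 * of_int k + \<epsilon> e"
    proof
      fix e assume "e \<in> {e\<in>E. tgt e = v}"
      then have e: "e \<in> E" by simp
      obtain k where k: "lslope (edge_fun src tgt l g e) (l e) = 2 * of_int k + \<epsilon> e" using par[OF e] by blast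
      show "\<exists>k::int. - lslope (edge_fun src tgt l g e) (l e) = 2 * of_int k + \<epsilon> e"
      proof (cases "e \<in> P")
        case True
        then show ?thesis using k unfolding \<epsilon>_def by (intro exI[of _ "-k-1"]) simp
      next
        case False
        then show ?thesis using k unfolding \<epsilon>_def by (intro exI[of _ "-k"]) simp
      qed
    qed
    from sum_parity[OF f1(2) this] obtain K2 where K2: "(\<Sum>e\<in>{e\<in>E. tgt e = v}. - lslope (edge_fun src tgt l g e) (l e)) = 2 * of_int K2 + (\<Sum>e\<in>{e\<in>E. tgt e = v}. \<epsilon> e)"
      by blast
    have c1: "{e\<in>E. src e = v} \<inter> P = {e\<in>P. src e = v}" using PE by auto
    have c2: "{e\<in>E. tgt e = v} \<inter> P = {e\<in>P. tgt e = v}" using PE by auto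
    have s1: "(\<Sum>e\<in>{e\<in>E. src e = v}. \<epsilon> e) = real (card {e\<in>P. src e = v})"
      unfolding \<epsilon>_def using sum_if_card[OF f1(1), of P 1] c1 by simp
    have s2: "(\<Sum>e\<in>{e\<in>E. tgt e = v}. \<epsilon> e) = real (card {e\<in>P. tgt e = v})"
      unfolding \<epsilon>_def using sum_if_card[OF f1(2), of P 1] c2 by simp
    have "real (deg P src tgt v) = of_int (2 * (D (Vert v) - K1 - K2))"
      using o K1 K2 s1 s2 unfolding deg_def by simp
    then have "int (deg P src tgt v) = 2 * (D (Vert v) - K1 - K2)"
      by (metis of_int_eq_iff of_int_of_nat_eq)
    then show "even (deg P src tgt v)" by presburger
  qed
  note tP = tent_pwl_all[OF pos, of src tgt P]
  define h where "h = (\<lambda>p::('v,'e) pt. (1/2) * g p + (-1) * tent l P p)"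
  have rh: "rational_fun V E src tgt l h"
    unfolding rational_fun_def
  proof
    fix e assume e: "e \<in> E"
    have le: "0 < l e" using pos e by auto
    have pw: "pwl (l e) (\<lambda>_. True) (edge_fun src tgt l h e)" unfolding h_def edge_fun_comb
      by (rule pwl_comb[OF pg[rule_format, OF e] tP[rule_format, OF e]]) simp
    have "rslope (edge_fun src tgt l h e) t \<in> \<int>" if t: "0 \<le> t" "t < l e" for t
    proof -
      have "rslope (edge_fun src tgt l h e) t = (1/2) * rslope (edge_fun src tgt l g e) t + (-1) * rslope (edge_fun src tgt l (tent l P) e) t"
        unfolding h_def edge_fun_comb by (rule rslope_comb[OF pg[rule_format, OF e] tP[rule_format, OF e] t])
      moreover obtain k where k: "rslope (edge_fun src tgt l g e) t = 2 * of_int k + \<epsilon> e" using par[OF e] t by blast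
      moreover have "rslope (edge_fun src tgt l (tent l P) e) t = (if e \<in> P then (if t < l e/2 then 1/2 else -1/2) else 0)"
        by (rule tent_rslope[where l=l and e=e and P=P, OF le t])
      ultimately have "rslope (edge_fun src tgt l h e) t = (if e \<in> P then (if t < l e/2 then of_int k else of_int (k+1)) else of_int k)"
        unfolding \<epsilon>_def by (simp split: if_splits; simp add: algebra_simps)
      then show ?thesis by (simp split: if_splits)
    qed
    then have "pwl (l e) (\<lambda>s. s \<in> \<int>) (edge_fun src tgt l h e)" using pwl_int[OF pw] by blast
    then show "int_pl (l e) (edge_fun src tgt l h e)" using pwl_int_pl le by blast
  qed
  have oh: "of_int (D p - F_div src tgt l P p) = ord E src tgt l h p" if p: "p \<in> points V E l" for p
  proof -
    have "ord E src tgt l h p = (1/2) * ord E src tgt l g p + (-1) * ord E src tgt l (tent l P) p"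
      unfolding h_def by (rule ord_comb[OF pg tP pos p])
    moreover have "ord E src tgt l g p = of_int (2 * D p)" using g(2) p by simp
    moreover have "ord E src tgt l (tent l P) p = of_int (F_div src tgt l P p)" by (rule ord_tent[OF fin(2) pos Pcyc p])
    ultimately show ?thesis by simp
  qed
  have "is_divisor V E l (\<lambda>p. 1 * D p + (-1) * F_div src tgt l P p)"
    by (rule divisor_comb[OF D F_is_divisor[OF fin se pos Pcyc]])
  moreover have "(\<lambda>p. 1 * D p + (-1) * F_div src tgt l P p) = (\<lambda>p. D p - F_div src tgt l P p)" by auto
  ultimately have "is_divisor V E l (\<lambda>p. D p - F_div src tgt l P p)" by simp
  then have "principal V E src tgt l (\<lambda>p. D p - F_div src tgt l P p)"
    unfolding principal_def using rh oh by blast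
  then show ?thesis using class_eq[OF pos] Pcyc by blast
qed


theorem proposition3p1:
  fixes V :: "'v set" and E :: "'e set" and src tgt :: "'e \<Rightarrow> 'v"
    and w :: "'v \<Rightarrow> nat" and l :: "'e \<Rightarrow> real"
  assumes "tropical_curve V E src tgt w l"
  shows "bij_betw (\<lambda>P. div_class V E src tgt l (F_div src tgt l P))
           (cycle_space V E src tgt) (R_trop V E src tgt l)"
proof -
  have fin: "finite V" "finite E" and se: "\<forall>e\<in>E. src e \<in> V \<and> tgt e \<in> V"
    and pos: "\<forall>e\<in>E. 0 < l e"
    using assms unfolding tropical_curve_def by auto
  show ?thesis unfolding bij_betw_def
  proof
    show "inj_on (\<lambda>P. div_class V E src tgt l (F_div src tgt l P)) (cycle_space V E src tgt)"
    proof (rule inj_onI)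
      fix P Q assume "P \<in> cycle_space V E src tgt" "Q \<in> cycle_space V E src tgt"
        "div_class V E src tgt l (F_div src tgt l P) = div_class V E src tgt l (F_div src tgt l Q)"
      then show "P = Q" by (rule inj_part[OF fin se pos])
    qed
  next
    show "(\<lambda>P. div_class V E src tgt l (F_div src tgt l P)) ` cycle_space V E src tgt = R_trop V E src tgt l"
    proof
      show "(\<lambda>P. div_class V E src tgt l (F_div src tgt l P)) ` cycle_space V E src tgt \<subseteq> R_trop V E src tgt l"
      proof
        fix X assume "X \<in> (\<lambda>P. div_class V E src tgt l (F_div src tgt l P)) ` cycle_space V E src tgt"
        then obtain P where P: "P \<in> cycle_space V E src tgt" "X = div_class V E src tgt l (F_div src tgt l P)"
          by blast
        have "is_divisor V E l (F_div src tgt l P)" by (rule F_is_divisor[OF fin se pos P(1)])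
        moreover have "principal V E src tgt l (\<lambda>p. 2 * F_div src tgt l P p)"
          by (rule twoF_principal[OF fin se pos P(1)])
        ultimately show "X \<in> R_trop V E src tgt l" unfolding R_trop_def using P(2) by blast
      qed
    next
      show "R_trop V E src tgt l \<subseteq> (\<lambda>P. div_class V E src tgt l (F_div src tgt l P)) ` cycle_space V E src tgt"
      proof
        fix X assume "X \<in> R_trop V E src tgt l"
        then obtain D where D: "X = div_class V E src tgt l D" "is_divisor V E l D"
          "principal V E src tgt l (\<lambda>p. 2 * D p)" unfolding R_trop_def by blast
        obtain P where "P \<in> cycle_space V E src tgt"
          "div_class V E src tgt l D = div_class V E src tgt l (F_div src tgt l P)"
          using surj_part[OF fin se pos D(2,3)] by blast
        then show "X \<in> (\<lambda>P. div_class V E src tgt l (F_div src tgt l P)) ` cycle_space V E src tgt"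
          using D(1) by blast
      qed
    qed
  qed
qed

end
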